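(* Under the setting below, for every $\tau\in[0,\bar\tau)$ one has $$B(\tau)=A(\tau)+(2e^{-\delta\tau}-1)S^*(\tau)\beta'(S^*(\tau)),$$ hence $B(\tau)<A(\tau)$; in particular $\lambda=0$ is never a root of $\lambda+A(\tau)-B(\tau)e^{-\lambda\tau}=0$. Moreover, if this equation has a purely imaginary root $i\omega$ for some $\tau\in[0,\bar\tau)$, then $A(\tau)<|B(\tau)|$ (so $B(\tau)<0$), which is equivalent to $$\frac{4\delta e^{-\delta\tau}}{2e^{-\delta\tau}-1}+(2e^{-\delta\tau}-1)\,\chi\!\left(\beta^{-1}\!\Big(\frac{\delta}{2e^{-\delta\tau}-1}\Big)\right)<0,\qquad \chi(y):=y\beta'(y).$$
   Context: Let $\delta>0$ and $\beta:[0,+\infty)\to(0,+\infty)$ continuously differentiable, strictly decreasing, with $\beta'(s)<0$ for $s>0$, $\lim_{S\to+\infty}\beta(S)=0$, and assume $\delta<\beta(0)$. Let $\bar\tau:=\frac1\delta\ln\!\big(\frac{2\beta(0)}{\delta+\beta(0)}\big)$, $\beta^{-1}:(0,\beta(0)]\to[0,\infty)$ the inverse of $\beta$. For $\tau\in[0,\bar\tau)$ set $S^*(\tau)=\beta^{-1}\!\big(\frac{\delta}{2e^{-\delta\tau}-1}\big)$, $N^*(\tau)=(2e^{-\delta\tau}-1)e^{\delta\tau}S^*(\tau)$, $A(\tau)=\delta+\beta(S^*(\tau))$ and $B(\tau)=[2\beta(S^*(\tau))+N^*(\tau)\beta'(S^*(\tau))]e^{-\delta\tau}$. *)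

theory Defs
  imports "HOL-Analysis.Analysis"
begin

definition tau_bar :: "real \<Rightarrow> (real \<Rightarrow> real) \<Rightarrow> real" where
  "tau_bar \<delta> \<beta> = (1 / \<delta>) * ln (2 * \<beta> 0 / (\<delta> + \<beta> 0))"

text \<open>Inverse of beta on its range (0, beta 0], beta being a bijection [0,inf) -> (0, beta 0].\<close>
definition beta_inv :: "(real \<Rightarrow> real) \<Rightarrow> real \<Rightarrow> real" where
  "beta_inv \<beta> y = the_inv_into {0..} \<beta> y"

definition S_star :: "real \<Rightarrow> (real \<Rightarrow> real) \<Rightarrow> real \<Rightarrow> real" where
  "S_star \<delta> \<beta> \<tau> = beta_inv \<beta> (\<delta> / (2 * exp (-\<delta>*\<tau>) - 1))"

definition N_star :: "real \<Rightarrow> (real \<Rightarrow> real) \<Rightarrow> real \<Rightarrow> real" where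
  "N_star \<delta> \<beta> \<tau> = (2 * exp (-\<delta>*\<tau>) - 1) * exp (\<delta>*\<tau>) * S_star \<delta> \<beta> \<tau>"

definition A_coef :: "real \<Rightarrow> (real \<Rightarrow> real) \<Rightarrow> real \<Rightarrow> real" where
  "A_coef \<delta> \<beta> \<tau> = \<delta> + \<beta> (S_star \<delta> \<beta> \<tau>)"

definition B_coef :: "real \<Rightarrow> (real \<Rightarrow> real) \<Rightarrow> (real \<Rightarrow> real) \<Rightarrow> real \<Rightarrow> real" where
  "B_coef \<delta> \<beta> \<beta>' \<tau> = (2 * \<beta> (S_star \<delta> \<beta> \<tau>) + N_star \<delta> \<beta> \<tau> * \<beta>' (S_star \<delta> \<beta> \<tau>))
      * exp (-\<delta>*\<tau>)"

definition chi :: "(real \<Rightarrow> real) \<Rightarrow> real \<Rightarrow> real" where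
  "chi \<beta>' y = y * \<beta>' y"

end

theory Submission
  imports Defs
begin

theorem mainTheorem8:
  fixes \<delta> :: real and \<beta> \<beta>' :: "real \<Rightarrow> real"
  assumes delta_pos: "\<delta> > 0"
    and beta_pos: "\<And>s. s \<ge> 0 \<Longrightarrow> \<beta> s > 0"
    and beta_deriv: "\<And>s. s \<ge> 0 \<Longrightarrow> (\<beta> has_real_derivative \<beta>' s) (at s within {0..})"
    and beta'_cont: "continuous_on {0..} \<beta>'"
    and beta_decr: "\<And>x y. 0 \<le> x \<Longrightarrow> x < y \<Longrightarrow> \<beta> y < \<beta> x"
    and beta'_neg: "\<And>s. s > 0 \<Longrightarrow> \<beta>' s < 0"
    and beta_lim: "(\<beta> \<longlongrightarrow> 0) at_top"
    and delta_lt: "\<delta> < \<beta> 0"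
  shows "\<forall>\<tau>. 0 \<le> \<tau> \<and> \<tau> < tau_bar \<delta> \<beta> \<longrightarrow>
     B_coef \<delta> \<beta> \<beta>' \<tau> = A_coef \<delta> \<beta> \<tau>
        + (2 * exp (-\<delta>*\<tau>) - 1) * S_star \<delta> \<beta> \<tau> * \<beta>' (S_star \<delta> \<beta> \<tau>)
   \<and> B_coef \<delta> \<beta> \<beta>' \<tau> < A_coef \<delta> \<beta> \<tau>
   \<and> (0::complex) + complex_of_real (A_coef \<delta> \<beta> \<tau>)
        - complex_of_real (B_coef \<delta> \<beta> \<beta>' \<tau>) * exp (- 0 * complex_of_real \<tau>) \<noteq> 0
   \<and> (A_coef \<delta> \<beta> \<tau> < \<bar>B_coef \<delta> \<beta> \<beta>' \<tau>\<bar> \<longleftrightarrow>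
        4 * \<delta> * exp (-\<delta>*\<tau>) / (2 * exp (-\<delta>*\<tau>) - 1)
        + (2 * exp (-\<delta>*\<tau>) - 1) * chi \<beta>' (beta_inv \<beta> (\<delta> / (2 * exp (-\<delta>*\<tau>) - 1))) < 0)
   \<and> (\<forall>\<omega>::real. \<i> * complex_of_real \<omega> + complex_of_real (A_coef \<delta> \<beta> \<tau>)
          - complex_of_real (B_coef \<delta> \<beta> \<beta>' \<tau>) * exp (- (\<i> * complex_of_real \<omega>) * complex_of_real \<tau>) = 0
        \<longrightarrow> A_coef \<delta> \<beta> \<tau> < \<bar>B_coef \<delta> \<beta> \<beta>' \<tau>\<bar> \<and> B_coef \<delta> \<beta> \<beta>' \<tau> < 0)"
proof (intro allI impI)
  fix \<tau> assume t: "0 \<le> \<tau> \<and> \<tau> < tau_bar \<delta> \<beta>"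
  define E where "E = exp (-\<delta>*\<tau>)"
  define c where "c = 2 * E - 1"
  have b0: "\<beta> 0 > 0" using beta_pos by simp
  have "\<delta> * \<tau> < ln (2 * \<beta> 0 / (\<delta> + \<beta> 0))"
    using t delta_pos unfolding tau_bar_def by (simp add: field_simps)
  hence "exp (\<delta> * \<tau>) < 2 * \<beta> 0 / (\<delta> + \<beta> 0)"
    using b0 delta_pos proof -
    have "2 * \<beta> 0 / (\<delta> + \<beta> 0) > 0" using b0 delta_pos by simp
    thus ?thesis using \<open>\<delta> * \<tau> < _\<close> by (metis exp_less_mono exp_ln)
  qed
  hence "exp (\<delta> * \<tau>) * (\<delta> + \<beta> 0) < 2 * \<beta> 0" using b0 delta_pos by (simp add: field_simps)
  moreover have "E * exp (\<delta> * \<tau>) = 1" unfolding E_def by (simp add: exp_minus field_simps)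
  ultimately have "\<delta> + \<beta> 0 < 2 * \<beta> 0 * E"
    proof -
    have "(\<delta> + \<beta> 0) = E * (exp (\<delta> * \<tau>) * (\<delta> + \<beta> 0))" using \<open>E * exp (\<delta> * \<tau>) = 1\<close> by (simp add: mult.assoc[symmetric])
    also have "\<dots> < E * (2 * \<beta> 0)" using calculation \<open>exp (\<delta> * \<tau>) * (\<delta> + \<beta> 0) < 2 * \<beta> 0\<close>
      by (intro mult_strict_left_mono) (auto simp: E_def)
    finally show ?thesis by (simp add: algebra_simps)
  qed
  hence cgt: "c * \<beta> 0 > \<delta>" unfolding c_def by (simp add: algebra_simps)
  have cpos: "c > 0" using cgt b0 delta_pos by (smt (verit) mult_nonpos_nonneg)
  define y where "y = \<delta> / c"
  have ypos: "y > 0" unfolding y_def using cpos delta_pos by simp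
  have ylt: "y < \<beta> 0" unfolding y_def using cpos cgt by (simp add: field_simps)
  have contb: "continuous_on {0..} \<beta>"
    by (rule DERIV_continuous_on) (use beta_deriv in auto)
  have "eventually (\<lambda>x. \<beta> x < y) at_top" using beta_lim ypos by (rule order_tendstoD)
  then obtain b where bb: "\<And>x. x \<ge> b \<Longrightarrow> \<beta> x < y" by (auto simp: eventually_at_top_linorder)
  define b' where "b' = max b 0"
  have "\<exists>x\<ge>0. x \<le> b' \<and> \<beta> x = y"
    apply (rule IVT2')
    using bb[of b'] ylt contb unfolding b'_def
    by (auto intro: continuous_on_subset)
  then obtain S where S: "S \<ge> 0" "\<beta> S = y" by auto
  have inj: "inj_on \<beta> {0..}"
    unfolding inj_on_def
    proof (intro ballI impI)
    fix x z assume "x \<in> {0::real..}" "z \<in> {0..}" "\<beta> x = \<beta> z"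
    thus "x = z" using beta_decr[of x z] beta_decr[of z x] by (cases x z rule: linorder_cases) auto
  qed
  have SS: "S_star \<delta> \<beta> \<tau> = S"
    unfolding S_star_def beta_inv_def E_def[symmetric] c_def[symmetric] y_def[symmetric]
    using the_inv_into_f_f[OF inj, of S] S by simp
  have Spos: "S > 0" using S ylt by (metis less_eq_real_def less_irrefl)
  have bn: "\<beta>' S < 0" using beta'_neg Spos by simp
  have yc: "y * c = \<delta>" unfolding y_def using cpos by simp
  define A where "A = A_coef \<delta> \<beta> \<tau>"
  define B where "B = B_coef \<delta> \<beta> \<beta>' \<tau>"
  have Aeq: "A = \<delta> + y" unfolding A_def A_coef_def SS S ..
  have "B = (2 * y + c * exp (\<delta>*\<tau>) * S * \<beta>' S) * E"
    unfolding B_def B_coef_def N_star_def SS S E_def c_def ..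
  also have "\<dots> = 2 * y * E + c * S * \<beta>' S"
    using \<open>E * exp (\<delta> * \<tau>) = 1\<close> by (simp add: algebra_simps)
  finally have Beq: "B = A + c * S * \<beta>' S"
    using yc unfolding Aeq c_def by (simp add: algebra_simps)
  have neg: "c * S * \<beta>' S < 0" using cpos Spos bn by (simp add: mult_pos_neg)
  have BA: "B < A" using Beq neg by simp
  have Apos: "A > 0" using Aeq delta_pos ypos by simp
  have eq4: "(A < \<bar>B\<bar>) = (4 * \<delta> * E / c + c * chi \<beta>' S < 0)"
  proof -
    have "(A < \<bar>B\<bar>) = (A + B < 0)" using BA Apos by auto
    moreover have "A + B = 4 * \<delta> * E / c + c * chi \<beta>' S"
    proof -
      have "2 * \<delta> + 2 * y = 4 * \<delta> * E / c"
        using cpos unfolding y_def c_def by (simp add: field_simps)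
      thus ?thesis unfolding Beq Aeq chi_def by (simp add: algebra_simps)
    qed
    ultimately show ?thesis by simp
  qed
  have bi: "beta_inv \<beta> (\<delta> / c) = S"
    using SS unfolding S_star_def E_def c_def .
  have last: "A < \<bar>B\<bar> \<and> B < 0" if h: "\<i> * complex_of_real \<omega> + complex_of_real A
          - complex_of_real B * exp (- (\<i> * complex_of_real \<omega>) * complex_of_real \<tau>) = 0" for \<omega>
  proof -
    have ex: "exp (- (\<i> * complex_of_real \<omega>) * complex_of_real \<tau>) = Complex (cos (\<omega>*\<tau>)) (- sin (\<omega>*\<tau>))"
      by (simp add: exp_eq_polar cis.ctr)
    have re: "A = B * cos (\<omega>*\<tau>)" and im: "\<omega> + B * sin (\<omega>*\<tau>) = 0"
      using arg_cong[OF h, of Re] arg_cong[OF h, of Im] unfolding ex by simp_all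
    have "A \<le> \<bar>B\<bar>"
      using re abs_cos_le_one[of "\<omega>*\<tau>"] proof -
      have "A \<le> \<bar>B * cos (\<omega>*\<tau>)\<bar>" using re by simp
      also have "\<dots> = \<bar>B\<bar> * \<bar>cos (\<omega>*\<tau>)\<bar>" by (simp add: abs_mult)
      also have "\<dots> \<le> \<bar>B\<bar>" using abs_cos_le_one[of "\<omega>*\<tau>"] by (simp add: mult_left_le)
      finally show ?thesis .
    qed
    moreover have "A \<noteq> \<bar>B\<bar>"
    proof
      assume AB: "A = \<bar>B\<bar>"
      hence "\<bar>cos (\<omega>*\<tau>)\<bar> = 1" using re Apos by (metis abs_mult abs_of_pos mult_cancel_left1 less_irrefl)
      hence "sin (\<omega>*\<tau>) = 0" using sin_cos_squared_add[of "\<omega>*\<tau>"]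
        by (metis add_cancel_left_left one_power2 power2_abs power_eq_0_iff)
      hence "\<omega> = 0" using im by simp
      hence "A = B" using re by simp
      thus False using BA by simp
    qed
    ultimately have "A < \<bar>B\<bar>" by simp
    thus ?thesis using BA by auto
  qed
  show "B_coef \<delta> \<beta> \<beta>' \<tau> = A_coef \<delta> \<beta> \<tau>
        + (2 * exp (-\<delta>*\<tau>) - 1) * S_star \<delta> \<beta> \<tau> * \<beta>' (S_star \<delta> \<beta> \<tau>)
   \<and> B_coef \<delta> \<beta> \<beta>' \<tau> < A_coef \<delta> \<beta> \<tau>
   \<and> (0::complex) + complex_of_real (A_coef \<delta> \<beta> \<tau>)
        - complex_of_real (B_coef \<delta> \<beta> \<beta>' \<tau>) * exp (- 0 * complex_of_real \<tau>) \<noteq> 0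
   \<and> (A_coef \<delta> \<beta> \<tau> < \<bar>B_coef \<delta> \<beta> \<beta>' \<tau>\<bar> \<longleftrightarrow>
        4 * \<delta> * exp (-\<delta>*\<tau>) / (2 * exp (-\<delta>*\<tau>) - 1)
        + (2 * exp (-\<delta>*\<tau>) - 1) * chi \<beta>' (beta_inv \<beta> (\<delta> / (2 * exp (-\<delta>*\<tau>) - 1))) < 0)
   \<and> (\<forall>\<omega>::real. \<i> * complex_of_real \<omega> + complex_of_real (A_coef \<delta> \<beta> \<tau>)
          - complex_of_real (B_coef \<delta> \<beta> \<beta>' \<tau>) * exp (- (\<i> * complex_of_real \<omega>) * complex_of_real \<tau>) = 0
        \<longrightarrow> A_coef \<delta> \<beta> \<tau> < \<bar>B_coef \<delta> \<beta> \<beta>' \<tau>\<bar> \<and> B_coef \<delta> \<beta> \<beta>' \<tau> < 0)"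
    unfolding A_def[symmetric] B_def[symmetric] E_def[symmetric] c_def[symmetric] SS bi
  proof (intro conjI allI impI)
    show "(0::complex) + complex_of_real A - complex_of_real B * exp (- 0 * complex_of_real \<tau>) \<noteq> 0"
      using BA by (simp flip: of_real_diff)
  qed (use Beq BA eq4 last in auto)
qed

end
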